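(* Let $n\ge 1$ and let $L=(l_{ij})$ be a real symmetric $n\times n$ matrix satisfying $l_{ii}=-\sum_{j\neq i} l_{ij}$ for $i=1,\dots,n$. Let $G$ be the weighted undirected graph with vertex set $\{1,\dots,n\}$ having an edge $\{i,j\}$ of weight $l_{ij}$ whenever $i\neq j$ and $l_{ij}\neq 0$ (and no other edges); $G$ may be disconnected. Let $G_+$ (resp. $G_-$) be the subgraph of $G$ with the same vertex set $\{1,\dots,n\}$ and only the edges of positive (resp. negative) weight. For a graph $H$ let $c(H)$ denote its number of connected components, and let $n_+(L)$, $n_-(L)$, $n_0(L)$ denote the numbers of positive, negative and zero eigenvalues of $L$, counted with multiplicity. Then \[ c(G_+)-c(G)\le n_+(L)\le n-c(G_-),\qquad c(G_-)-c(G)\le n_-(L)\le n-c(G_+), \] \[ c(G)\le n_0(L)\le n+2c(G)-c(G_+)-c(G_-). \]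
   Context: The matrix $L$ is what the paper calls a (weighted) Laplacian matrix of the graph $G$: the edge weights are the off-diagonal entries of $L$ and the diagonal entries are minus the row sums of the off-diagonal entries. Isolated vertices count as connected components. *)

theory Defs
  imports "Jordan_Normal_Form.Char_Poly"
begin

text \<open>Graphs on the vertex set {0..<n} (0-based indexing of {1..n}) given by an
  edge predicate E; connected components via reflexive-transitive closure of the
  edge relation restricted to the vertex set. Isolated vertices are components.\<close>

definition reach :: "nat \<Rightarrow> (nat \<Rightarrow> nat \<Rightarrow> bool) \<Rightarrow> (nat \<times> nat) set" where
  "reach n E = (Restr {(i,j). E i j} {0..<n})\<^sup>* \<inter> ({0..<n} \<times> {0..<n})"

definition num_components :: "nat \<Rightarrow> (nat \<Rightarrow> nat \<Rightarrow> bool) \<Rightarrow> nat" where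
  "num_components n E = card ({0..<n} // reach n E)"

definition graph_G :: "real mat \<Rightarrow> nat \<Rightarrow> nat \<Rightarrow> bool" where
  "graph_G L i j \<longleftrightarrow> i \<noteq> j \<and> L $$ (i,j) \<noteq> 0"

definition graph_Gpos :: "real mat \<Rightarrow> nat \<Rightarrow> nat \<Rightarrow> bool" where
  "graph_Gpos L i j \<longleftrightarrow> i \<noteq> j \<and> L $$ (i,j) > 0"

definition graph_Gneg :: "real mat \<Rightarrow> nat \<Rightarrow> nat \<Rightarrow> bool" where
  "graph_Gneg L i j \<longleftrightarrow> i \<noteq> j \<and> L $$ (i,j) < 0"

definition n_pos :: "real mat \<Rightarrow> nat" where
  "n_pos L = (\<Sum>x\<in>{x. x > 0 \<and> poly (char_poly L) x = 0}. order x (char_poly L))"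

definition n_neg :: "real mat \<Rightarrow> nat" where
  "n_neg L = (\<Sum>x\<in>{x. x < 0 \<and> poly (char_poly L) x = 0}. order x (char_poly L))"

definition n_zero :: "real mat \<Rightarrow> nat" where
  "n_zero L = order 0 (char_poly L)"

end

theory Submission imports Defs "Jordan_Normal_Form.Schur_Decomposition" begin

lemma kernel_exists:
  fixes M :: "real mat"
  assumes M: "M \<in> carrier_mat m k" and mk: "m < k"
  shows "\<exists>y\<in>carrier_vec k. y \<noteq> 0\<^sub>v k \<and> M *\<^sub>v y = 0\<^sub>v m"
proof -
  define c where "c = (\<lambda>i. if i < m then row M i else 0\<^sub>v k)"
  define A where "A = mat\<^sub>r k k (\<lambda>i. if i = k - 1 then 0\<^sub>v k else c i)"
  have Ac: "A \<in> carrier_mat k k" unfolding A_def by auto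
  have "det A = 0" unfolding A_def
    by (rule det_row_0, insert mk M, auto simp: c_def)
  then obtain y where y: "y \<in> carrier_vec k" "y \<noteq> 0\<^sub>v k" "A *\<^sub>v y = 0\<^sub>v k"
    using det_0_iff_vec_prod_zero_field[OF Ac] by auto
  have "M *\<^sub>v y = 0\<^sub>v m"
  proof (rule eq_vecI)
    fix i assume i: "i < dim_vec (0\<^sub>v m :: real vec)"
    hence i: "i < m" by auto
    have "(A *\<^sub>v y) $ i = 0" using y(3) i mk by auto
    moreover have "(A *\<^sub>v y) $ i = row M i \<bullet> y" using i mk M
      unfolding A_def c_def by (auto simp: mult_mat_vec_def)
    ultimately show "(M *\<^sub>v y) $ i = 0\<^sub>v m $ i" using i M by auto
  qed (insert M, auto)
  with y show ?thesis by auto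
qed

lemma real_eigenvalue:
  fixes A :: "real mat"
  assumes A: "A \<in> carrier_mat n n" and sym: "transpose_mat A = A" and n: "n > 0"
  shows "\<exists>e. poly (char_poly A) e = 0"
proof -
  define Ac where "Ac = map_mat complex_of_real A"
  have Acc: "Ac \<in> carrier_mat n n" using A unfolding Ac_def by auto
  obtain as where as: "char_poly Ac = (\<Prod>a\<leftarrow>as. [:- a, 1:])" "length as = n"
    using char_poly_factorized[OF Acc] by auto
  define l where "l = as ! 0"
  have "l \<in> set as" using as n unfolding l_def by auto
  hence "poly (char_poly Ac) l = 0" unfolding as by (rule linear_poly_root)
  hence "eigenvalue Ac l" using eigenvalue_root_char_poly[OF Acc] by auto
  then obtain v where v: "v \<in> carrier_vec n" "v \<noteq> 0\<^sub>v n" "Ac *\<^sub>v v = l \<cdot>\<^sub>v v"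
    unfolding eigenvalue_def eigenvector_def using Acc by auto
  have Aij: "A $$ (i,j) = A $$ (j,i)" if "i < n" "j < n" for i j
    using sym that A by (metis carrier_matD index_transpose_mat(1))
  have ev: "(\<Sum>j<n. complex_of_real (A $$ (i,j)) * v $ j) = l * v $ i" if i: "i < n" for i
  proof -
    have "(Ac *\<^sub>v v) $ i = (l \<cdot>\<^sub>v v) $ i" using v by simp
    thus ?thesis using i v A unfolding Ac_def
      by (auto simp: mult_mat_vec_def scalar_prod_def lessThan_atLeast0)
  qed
  define S where "S = (\<Sum>i<n. cnj (v $ i) * (\<Sum>j<n. complex_of_real (A $$ (i,j)) * v $ j))"
  have S1: "S = l * (\<Sum>i<n. cnj (v $ i) * v $ i)"
  proof -
    have "S = (\<Sum>i<n. cnj (v $ i) * (l * v $ i))" unfolding S_def by (rule sum.cong, auto simp: ev)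
    thus ?thesis by (simp add: sum_distrib_left mult_ac)
  qed
  have "cnj S = (\<Sum>i<n. v $ i * (\<Sum>j<n. complex_of_real (A $$ (i,j)) * cnj (v $ j)))"
    unfolding S_def by (simp add: cnj_sum)
  also have "\<dots> = (\<Sum>i<n. \<Sum>j<n. complex_of_real (A $$ (i,j)) * cnj (v $ j) * v $ i)"
    by (simp add: sum_distrib_left mult_ac)
  also have "\<dots> = (\<Sum>j<n. \<Sum>i<n. complex_of_real (A $$ (i,j)) * cnj (v $ j) * v $ i)"
    by (rule sum.swap)
  also have "\<dots> = S" unfolding S_def sum_distrib_left
    by (rule sum.cong, simp, rule sum.cong, simp, auto simp: Aij mult_ac)
  finally have cS: "cnj S = S" .
  have ImS: "Im S = 0" using arg_cong[OF cS, of Im] by simp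
  define N where "N = (\<Sum>i<n. (cmod (v $ i))^2)"
  have N: "(\<Sum>i<n. cnj (v $ i) * v $ i) = complex_of_real N"
  proof -
    have *: "cnj z * z = complex_of_real ((cmod z)^2)" for z
      by (subst complex_norm_square, simp add: mult.commute)
    show ?thesis unfolding N_def of_real_sum by (rule sum.cong, simp, rule *)
  qed
  have "\<exists>i<n. v $ i \<noteq> 0"
  proof (rule ccontr)
    assume "\<not> ?thesis"
    hence "v = 0\<^sub>v n" using v by (intro eq_vecI, auto)
    thus False using v by auto
  qed
  then obtain i where i: "i < n" "v $ i \<noteq> 0" by auto
  have "N > 0" unfolding N_def
    by (rule sum_pos2[of _ i], insert i, auto)
  have "Im (l * complex_of_real N) = 0" using S1 N ImS by simp
  hence "Im l = 0" using \<open>N > 0\<close> by simp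
  hence l: "l = complex_of_real (Re l)" by (simp add: complex_eq_iff)
  have "poly (char_poly Ac) (complex_of_real (Re l)) = 0"
    using \<open>poly (char_poly Ac) l = 0\<close> l by simp
  also have "char_poly Ac = map_poly of_real (char_poly A)"
    unfolding Ac_def by (rule of_real_hom.char_poly_hom[OF A])
  finally have "poly (char_poly A) (Re l) = 0"
    unfolding of_real_hom.poly_map_poly by simp
  thus ?thesis by auto
qed

lemma orthonormal_completion:
  fixes v :: "real vec"
  assumes v: "v \<in> carrier_vec n" and v0: "v \<noteq> 0\<^sub>v n"
  shows "\<exists>W. W \<in> carrier_mat n n \<and> transpose_mat W * W = 1\<^sub>m n \<and> col W 0 = (1 / sqrt (v \<bullet> v)) \<cdot>\<^sub>v v"
proof -
  interpret cof_vec_space n "TYPE(real)" .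
  define b where "b = basis_completion v"
  define ws where "ws = gram_schmidt n b"
  from basis_completion[OF v v0, folded b_def]
  have dist_b: "distinct b" and indep: "\<not> lin_dep (set b)" and b: "set b \<subseteq> carrier_vec n"
    and hdb: "hd b = v" and len_b: "length b = n" by auto
  have n: "n \<noteq> 0" using v v0 by (cases n, auto)
  from hdb len_b n obtain vs where bv: "b = v # vs" by (cases b, auto)
  from gram_schmidt_result[OF b dist_b indep refl, folded ws_def]
  have ws: "set ws \<subseteq> carrier_vec n" "corthogonal ws" "length ws = n"
    by (auto simp: len_b)
  from gram_schmidt_hd[OF v, of vs, folded bv] have hdws: "hd ws = v" unfolding ws_def .
  define nz where "nz = (\<lambda>w :: real vec. (1 / sqrt (w \<bullet> w)) \<cdot>\<^sub>v w)"
  define us where "us = map nz ws"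
  define W where "W = mat_of_cols n us"
  have us: "set us \<subseteq> carrier_vec n" "length us = n" using ws unfolding us_def nz_def by auto
  have Wc: "W \<in> carrier_mat n n" unfolding W_def using us by auto
  have orth: "ws ! i \<bullet> ws ! j = 0 \<longleftrightarrow> i \<noteq> j" if "i < n" "j < n" for i j
    using ws(2) that ws(3) unfolding corthogonal_def by auto
  have pos: "ws ! i \<bullet> ws ! i > 0" if "i < n" for i
  proof -
    have "ws ! i \<bullet> ws ! i \<ge> 0" using conjugate_square_ge_0_vec[of "ws ! i"] by simp
    moreover have "ws ! i \<bullet> ws ! i \<noteq> 0" using orth[OF that that] by auto
    ultimately show ?thesis by auto
  qed
  have "transpose_mat W * W = 1\<^sub>m n"
  proof (rule eq_matI)
    fix i j assume "i < dim_row (1\<^sub>m n :: real mat)" "j < dim_col (1\<^sub>m n :: real mat)"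
    hence i: "i < n" and j: "j < n" by auto
    have wi: "ws ! i \<in> carrier_vec n" "ws ! j \<in> carrier_vec n" using ws i j by auto
    have "(transpose_mat W * W) $$ (i,j) = us ! i \<bullet> us ! j"
    proof -
      have "(transpose_mat W * W) $$ (i,j) = col W i \<bullet> col W j" using Wc i j by auto
      also have "col W i = us ! i" unfolding W_def using us i by (intro col_mat_of_cols, auto)
      also have "col W j = us ! j" unfolding W_def using us j by (intro col_mat_of_cols, auto)
      finally show ?thesis .
    qed
    also have "\<dots> = (1 / sqrt (ws ! i \<bullet> ws ! i)) * (1 / sqrt (ws ! j \<bullet> ws ! j)) * (ws ! i \<bullet> ws ! j)"
      unfolding us_def nz_def using i j ws wi by auto
    also have "\<dots> = 1\<^sub>m n $$ (i,j)"
    proof (cases "i = j")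
      case True
      have p: "ws ! i \<bullet> ws ! i > 0" using pos i by auto
      then show ?thesis using True i
        by (simp add: real_sqrt_mult[symmetric] field_simps)
    next
      case False
      then show ?thesis using orth[OF i j] i j by auto
    qed
    finally show "(transpose_mat W * W) $$ (i,j) = 1\<^sub>m n $$ (i,j)" .
  qed (insert Wc, auto)
  moreover have "col W 0 = nz v"
    using n us ws hdws unfolding W_def us_def by (cases ws, auto)
  ultimately show ?thesis using Wc unfolding nz_def by blast
qed

definition diagm :: "real list \<Rightarrow> real mat" where
  "diagm es = mat (length es) (length es) (\<lambda>(i,j). if i = j then es ! i else 0)"

lemma diagm_carrier[simp]: "diagm es \<in> carrier_mat (length es) (length es)"
  unfolding diagm_def by auto

lemma spectral:
  fixes A :: "real mat"
  assumes "A \<in> carrier_mat n n" and "transpose_mat A = A"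
  shows "\<exists>U es. U \<in> carrier_mat n n \<and> transpose_mat U * U = 1\<^sub>m n \<and> U * transpose_mat U = 1\<^sub>m n
     \<and> length es = n \<and> A = U * diagm es * transpose_mat U"
  using assms
proof (induction n arbitrary: A)
  case 0
  show ?case
    by (rule exI[of _ "1\<^sub>m 0"], rule exI[of _ "[]"], insert 0, auto intro!: eq_matI simp: diagm_def)
next
  case (Suc m A)
  define n where "n = Suc m"
  have A: "A \<in> carrier_mat n n" and sym: "transpose_mat A = A" using Suc n_def by auto
  obtain e where "poly (char_poly A) e = 0" using real_eigenvalue[OF A sym] n_def by auto
  hence "eigenvalue A e" using eigenvalue_root_char_poly[OF A] by auto
  then obtain v where v: "v \<in> carrier_vec n" "v \<noteq> 0\<^sub>v n" "A *\<^sub>v v = e \<cdot>\<^sub>v v"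
    unfolding eigenvalue_def eigenvector_def using A by auto
  obtain W where W: "W \<in> carrier_mat n n" "transpose_mat W * W = 1\<^sub>m n"
    and W0: "col W 0 = (1 / sqrt (v \<bullet> v)) \<cdot>\<^sub>v v"
    using orthonormal_completion[OF v(1,2)] by auto
  have WT: "transpose_mat W \<in> carrier_mat n n" using W by auto
  have WWT: "W * transpose_mat W = 1\<^sub>m n"
    using mat_mult_left_right_inverse[OF WT W(1) W(2)] .
  define A' where "A' = transpose_mat W * A * W"
  have A'c: "A' \<in> carrier_mat n n" unfolding A'_def using W A by auto
  have symA': "transpose_mat A' = A'"
  proof -
    have "transpose_mat A' = transpose_mat W * transpose_mat (transpose_mat W * A)"
      unfolding A'_def using W A by (subst transpose_mult[of _ n n _ n], auto)
    also have "transpose_mat (transpose_mat W * A) = transpose_mat A * W"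
      using W A by (subst transpose_mult[of _ n n _ n], auto)
    finally show ?thesis unfolding sym A'_def using W A by (simp add: assoc_mult_mat[of _ n n _ n _ n])
  qed
  have "A *\<^sub>v col W 0 = e \<cdot>\<^sub>v col W 0" unfolding W0 using v A
    by (auto simp: mult_mat_vec smult_smult_assoc mult.commute)
  have col0: "col A' 0 = e \<cdot>\<^sub>v unit_vec n 0"
  proof -
    have "col A' 0 = (transpose_mat W * A) *\<^sub>v col W 0" unfolding A'_def
      using W A n_def by (subst col_mult2, auto)
    also have "\<dots> = transpose_mat W *\<^sub>v (A *\<^sub>v col W 0)" using W A by (subst assoc_mult_mat_vec, auto)
    also have "\<dots> = e \<cdot>\<^sub>v (transpose_mat W *\<^sub>v col W 0)"
      unfolding \<open>A *\<^sub>v col W 0 = e \<cdot>\<^sub>v col W 0\<close> using W by (subst mult_mat_vec, auto)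
    also have "transpose_mat W *\<^sub>v col W 0 = col (transpose_mat W * W) 0"
      using W n_def by (subst col_mult2, auto)
    also have "\<dots> = unit_vec n 0" unfolding W(2) using n_def by simp
    finally show ?thesis .
  qed
  have Ai0: "A' $$ (i,0) = (if i = 0 then e else 0)" if "i < n" for i
  proof -
    have "A' $$ (i,0) = col A' 0 $ i" using that A'c n_def by auto
    thus ?thesis unfolding col0 using that by (auto simp: unit_vec_def)
  qed
  have A0j: "A' $$ (0,j) = (if j = 0 then e else 0)" if "j < n" for j
  proof -
    have "A' $$ (0,j) = transpose_mat A' $$ (j,0)" using that A'c n_def by auto
    thus ?thesis unfolding symA' using Ai0[OF that] by simp
  qed
  define A3 where "A3 = mat m m (\<lambda>(i,j). A' $$ (Suc i, Suc j))"
  have A3c: "A3 \<in> carrier_mat m m" unfolding A3_def by auto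
  have symA3: "transpose_mat A3 = A3"
  proof (rule eq_matI)
    fix i j assume "i < dim_row A3" "j < dim_col A3"
    hence ij: "i < m" "j < m" unfolding A3_def by auto
    have "A' $$ (Suc j, Suc i) = transpose_mat A' $$ (Suc i, Suc j)" using ij A'c n_def by auto
    thus "transpose_mat A3 $$ (i, j) = A3 $$ (i, j)" unfolding symA' using ij by (auto simp: A3_def)
  qed (auto simp: A3_def)
  define E :: "real mat" where "E = mat 1 1 (\<lambda>_. e)"
  have A'block: "A' = four_block_mat E (0\<^sub>m 1 m) (0\<^sub>m m 1) A3"
  proof (rule eq_matI)
    fix i j assume "i < dim_row (four_block_mat E (0\<^sub>m 1 m) (0\<^sub>m m 1) A3)"
      "j < dim_col (four_block_mat E (0\<^sub>m 1 m) (0\<^sub>m m 1) A3)"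
    hence ij: "i < Suc m" "j < Suc m" unfolding E_def A3_def by auto
    show "A' $$ (i, j) = four_block_mat E (0\<^sub>m 1 m) (0\<^sub>m m 1) A3 $$ (i, j)"
    proof (cases "i = 0 \<or> j = 0")
      case True
      then show ?thesis using ij Ai0 A0j n_def unfolding E_def A3_def by auto
    next
      case False
      then obtain i' j' where "i = Suc i'" "j = Suc j'" by (cases i; cases j; auto)
      then show ?thesis using ij unfolding E_def A3_def by auto
    qed
  qed (insert A'c n_def, auto simp: E_def A3_def)
  from Suc.IH[OF A3c symA3] obtain U3 es3 where U3: "U3 \<in> carrier_mat m m"
    "transpose_mat U3 * U3 = 1\<^sub>m m" "U3 * transpose_mat U3 = 1\<^sub>m m" "length es3 = m"
    "A3 = U3 * diagm es3 * transpose_mat U3" by auto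
  define U' where "U' = four_block_mat (1\<^sub>m 1) (0\<^sub>m 1 m) (0\<^sub>m m 1) U3"
  have U'c: "U' \<in> carrier_mat n n" unfolding U'_def n_def using U3 by auto
  have U'T: "transpose_mat U' = four_block_mat (1\<^sub>m 1) (0\<^sub>m 1 m) (0\<^sub>m m 1) (transpose_mat U3)"
    unfolding U'_def using U3 by (subst transpose_four_block_mat, auto)
  have D: "diagm (e # es3) = four_block_mat E (0\<^sub>m 1 m) (0\<^sub>m m 1) (diagm es3)"
    by (rule eq_matI, insert U3, auto simp: diagm_def E_def)
  have U'U': "transpose_mat U' * U' = 1\<^sub>m n"
    unfolding U'T unfolding U'_def n_def using U3
    by (subst mult_four_block_mat[OF one_carrier_mat zero_carrier_mat zero_carrier_mat _
       one_carrier_mat zero_carrier_mat zero_carrier_mat], auto)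
  have Ec: "E \<in> carrier_mat 1 1" unfolding E_def by auto
  have D3c: "diagm es3 \<in> carrier_mat m m" using diagm_carrier[of es3] U3 by simp
  have U3T: "transpose_mat U3 \<in> carrier_mat m m" using U3 by auto
  have st1: "U' * diagm (e # es3) = four_block_mat E (0\<^sub>m 1 m) (0\<^sub>m m 1) (U3 * diagm es3)"
    unfolding U'_def D
    by (subst mult_four_block_mat[OF one_carrier_mat zero_carrier_mat zero_carrier_mat U3(1)
       Ec zero_carrier_mat zero_carrier_mat D3c], insert Ec U3 D3c, auto)
  have U'DO': "U' * diagm (e # es3) * transpose_mat U' = A'"
    unfolding st1 U'T A'block U3(5)
    by (subst mult_four_block_mat[OF Ec zero_carrier_mat zero_carrier_mat mult_carrier_mat[OF U3(1) D3c]
       one_carrier_mat zero_carrier_mat zero_carrier_mat U3T], insert Ec U3 D3c, auto)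
  define U where "U = W * U'"
  have Uc: "U \<in> carrier_mat n n" unfolding U_def using W U'c by auto
  have UT: "transpose_mat U = transpose_mat U' * transpose_mat W"
    unfolding U_def using W U'c by (subst transpose_mult[of _ n n _ n], auto)
  have U'Tc: "transpose_mat U' \<in> carrier_mat n n" using U'c by auto
  have WWU: "transpose_mat W * (W * U') = U'"
    using assoc_mult_mat[OF WT W(1) U'c, symmetric] W(2) U'c by simp
  have OTO: "transpose_mat U * U = 1\<^sub>m n"
  proof -
    have "transpose_mat U * U = transpose_mat U' * (transpose_mat W * (W * U'))"
      unfolding UT unfolding U_def using W U'c U'Tc WT by (simp add: assoc_mult_mat[of _ n n _ n _ n])
    also have "\<dots> = 1\<^sub>m n" unfolding WWU using U'U' .
    finally show ?thesis .
  qed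
  have OOT: "U * transpose_mat U = 1\<^sub>m n"
    using mat_mult_left_right_inverse[of "transpose_mat U" n U] Uc OTO by auto
  have Dc: "diagm (e # es3) \<in> carrier_mat n n" using diagm_carrier[of "e # es3"] U3 n_def by simp
  have "U * diagm (e # es3) * transpose_mat U = W * (U' * diagm (e # es3) * transpose_mat U') * transpose_mat W"
    unfolding UT unfolding U_def using W U'c Dc U'Tc WT by (simp add: assoc_mult_mat[of _ n n _ n _ n])
  also have "\<dots> = (W * transpose_mat W) * A * (W * transpose_mat W)"
    unfolding U'DO' A'_def using W A WT by (simp add: assoc_mult_mat[of _ n n _ n _ n])
  also have "\<dots> = A" unfolding WWT using A by simp
  finally have "A = U * diagm (e # es3) * transpose_mat U" by simp
  thus ?case using Uc OTO OOT U3 n_def by (intro exI[of _ U] exI[of _ "e # es3"], auto)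
qed


lemma order_linear_prod: "Polynomial.order x (\<Prod>a\<leftarrow>es. [:- a, 1:]) = count_list es (x::real)"
proof (induction es)
  case Nil
  then show ?case by simp
next
  case (Cons a es)
  have nz: "(\<Prod>a\<leftarrow>es. [:- a, 1:]) \<noteq> (0 :: real poly)"
    by (auto simp: prod_list_zero_iff)
  have "Polynomial.order x (\<Prod>a\<leftarrow>a # es. [:- a, 1:]) = Polynomial.order x [:- a, 1:] + Polynomial.order x (\<Prod>a\<leftarrow>es. [:- a, 1:])"
  proof -
    have eq: "(\<Prod>a\<leftarrow>a # es. [:- a, 1:]) = [:- a, 1:] * (\<Prod>a\<leftarrow>es. [:- a, 1:])" by simp
    have ne: "[:- a, 1:] * (\<Prod>a\<leftarrow>es. [:- a, 1:]) \<noteq> (0 :: real poly)"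
      by (metis nz mult_eq_0_iff pCons_eq_0_iff zero_neq_one)
    show ?thesis unfolding eq by (rule order_mult[OF ne])
  qed
  also have "Polynomial.order x [:- a, 1:] = (if a = x then 1 else 0)"
  proof (cases "a = x")
    case True thus ?thesis by (simp add: order_linear)
  next
    case False thus ?thesis by (simp add: order_0I)
  qed
  finally show ?case using Cons by simp
qed

lemma sum_count_list: "(\<Sum>x\<in>{x. P x \<and> x \<in> set es}. count_list es x) = length (filter P es)"
proof -
  let ?M = "filter_mset P (mset es)"
  have "length (filter P es) = size (mset (filter P es))" by (simp only: size_mset)
  also have "\<dots> = size ?M" by (simp only: mset_filter)
  also have "\<dots> = sum (count ?M) (set_mset ?M)" by (rule size_multiset_overloaded_eq)
  also have "set_mset ?M = {x. P x \<and> x \<in> set es}" by auto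
  also have "sum (count ?M) {x. P x \<and> x \<in> set es} = (\<Sum>x\<in>{x. P x \<and> x \<in> set es}. count_list es x)"
    by (rule sum.cong, auto simp: count_mset)
  finally show ?thesis by simp
qed

lemma inertia_count:
  fixes L U :: "real mat"
  assumes L: "L \<in> carrier_mat n n" and U: "U \<in> carrier_mat n n"
    and UTU: "transpose_mat U * U = 1\<^sub>m n" and UUT: "U * transpose_mat U = 1\<^sub>m n"
    and les: "length es = n" and dec: "L = U * diagm es * transpose_mat U"
  shows "n_pos L = length (filter (\<lambda>e. e > 0) es)"
    "n_neg L = length (filter (\<lambda>e. e < 0) es)"
    "n_zero L = length (filter (\<lambda>e. e = 0) es)"
proof -
  have Dc: "diagm es \<in> carrier_mat n n" using diagm_carrier[of es] les by simp
  have "similar_mat_wit L (diagm es) U (transpose_mat U)"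
    unfolding similar_mat_wit_def Let_def using L U Dc UTU UUT dec by auto
  hence "similar_mat L (diagm es)" unfolding similar_mat_def by blast
  hence "char_poly L = char_poly (diagm es)" by (rule char_poly_similar)
  also have "\<dots> = (\<Prod>a\<leftarrow>diag_mat (diagm es). [:- a, 1:])"
    by (rule char_poly_upper_triangular[OF Dc], auto simp: upper_triangular_def diagm_def)
  also have "diag_mat (diagm es) = es" unfolding diag_mat_def diagm_def
    by (rule nth_equalityI, auto)
  finally have cp: "char_poly L = (\<Prod>a\<leftarrow>es. [:- a, 1:])" .
  have roots: "poly (char_poly L) x = 0 \<longleftrightarrow> x \<in> set es" for x
    unfolding cp poly_prod_list_zero_iff by auto
  have *: "(\<Sum>x\<in>{x. P x \<and> poly (char_poly L) x = 0}. Polynomial.order x (char_poly L)) = length (filter P es)" for P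
    unfolding roots unfolding cp order_linear_prod by (rule sum_count_list)
  show "n_pos L = length (filter (\<lambda>e. e > 0) es)" unfolding n_pos_def by (rule *)
  show "n_neg L = length (filter (\<lambda>e. e < 0) es)" unfolding n_neg_def by (rule *)
  have "n_zero L = count_list es 0" unfolding n_zero_def cp order_linear_prod ..
  also have "\<dots> = length (filter (\<lambda>e. e = 0) es)" by (induction es, auto)
  finally show "n_zero L = length (filter (\<lambda>e. e = 0) es)" .
qed

lemma count_bound:
  fixes B :: "real mat" and fs :: "real vec list"
  assumes B: "B \<in> carrier_mat n k" and fs: "set fs \<subseteq> carrier_vec n"
    and inj: "\<And>y. y \<in> carrier_vec k \<Longrightarrow> (\<forall>f\<in>set fs. f \<bullet> (B *\<^sub>v y) = 0) \<Longrightarrow> y = 0\<^sub>v k"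
  shows "k \<le> length fs"
proof (rule ccontr)
  assume "\<not> ?thesis"
  hence lt: "length fs < k" by auto
  define F where "F = mat_of_rows n fs"
  have F: "F \<in> carrier_mat (length fs) n" unfolding F_def by auto
  obtain y where y: "y \<in> carrier_vec k" "y \<noteq> 0\<^sub>v k" "(F * B) *\<^sub>v y = 0\<^sub>v (length fs)"
    using kernel_exists[OF mult_carrier_mat[OF F B] lt] by auto
  have "\<forall>f\<in>set fs. f \<bullet> (B *\<^sub>v y) = 0"
  proof
    fix f assume "f \<in> set fs"
    then obtain a where a: "a < length fs" "f = fs ! a" by (auto simp: in_set_conv_nth)
    have "(F * B) *\<^sub>v y = F *\<^sub>v (B *\<^sub>v y)" using F B y by (subst assoc_mult_mat_vec, auto)
    hence e: "F *\<^sub>v (B *\<^sub>v y) = 0\<^sub>v (length fs)" using y(3) by simp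
    have "(F *\<^sub>v (B *\<^sub>v y)) $ a = 0" unfolding e using a by simp
    moreover have "(F *\<^sub>v (B *\<^sub>v y)) $ a = fs ! a \<bullet> (B *\<^sub>v y)"
    proof -
      have "fs ! a \<in> carrier_vec n" using a fs nth_mem by blast
      hence "row F a = fs ! a" unfolding F_def using a by (subst mat_of_rows_row, auto)
      thus ?thesis using a F by (auto simp: mult_mat_vec_def)
    qed
    ultimately show "f \<bullet> (B *\<^sub>v y) = 0" using a by simp
  qed
  with inj[OF y(1)] y(2) show False by auto
qed

lemma reach_const:
  assumes "(i,j) \<in> reach n E" and "\<And>i j. i < n \<Longrightarrow> j < n \<Longrightarrow> E i j \<Longrightarrow> x i = x j"
  shows "x i = x j"
proof -
  have "(i,j) \<in> (Restr {(i,j). E i j} {0..<n})\<^sup>*" using assms(1) unfolding reach_def by auto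
  thus ?thesis
  proof (induction rule: rtrancl_induct)
    case base
    then show ?case by simp
  next
    case (step y z)
    then show ?case using assms(2)[of y z] by auto
  qed
qed

lemma components:
  fixes E :: "nat \<Rightarrow> nat \<Rightarrow> bool"
  assumes symE: "\<And>i j. i < n \<Longrightarrow> j < n \<Longrightarrow> E i j \<Longrightarrow> E j i"
  defines "c \<equiv> num_components n E"
  shows "\<exists>f r. (\<forall>i<n. f i < c) \<and> (\<forall>t<c. r t < n \<and> f (r t) = t)
     \<and> (\<forall>i<n. \<forall>j<n. E i j \<longrightarrow> f i = f j)
     \<and> (\<forall>i<n. (i, r (f i)) \<in> reach n E)"
proof -
  let ?R = "reach n E"
  let ?A = "{0..<n}"
  have sub: "?R \<subseteq> ?A \<times> ?A" unfolding reach_def by auto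
  have symR: "sym (Restr {(i,j). E i j} ?A)" using symE unfolding sym_def by auto
  have eq: "equiv ?A ?R"
  proof (rule equivI)
    show "refl_on ?A ?R" unfolding refl_on_def reach_def by auto
    show "sym ?R" using sym_rtrancl[OF symR] unfolding reach_def sym_def by auto
    show "trans ?R"
    proof (rule transI)
      fix x y z assume "(x,y) \<in> ?R" "(y,z) \<in> ?R"
      thus "(x,z) \<in> ?R" unfolding reach_def by (auto intro: rtrancl_trans)
    qed
    show "?R \<subseteq> ?A \<times> ?A" by (rule sub)
  qed
  have fin: "finite (?A // ?R)" by (rule finite_quotient[OF _ sub], auto)
  obtain g where g: "bij_betw g (?A // ?R) {0..<card (?A // ?R)}"
    using ex_bij_betw_finite_nat[OF fin] by auto
  have cc: "card (?A // ?R) = c" unfolding c_def num_components_def ..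
  define f where "f = (\<lambda>i. g (?R `` {i}))"
  have cls: "?R `` {i} \<in> ?A // ?R" if "i < n" for i using that by (auto intro: quotientI)
  have f1: "\<forall>i<n. f i < c" using g cls cc unfolding f_def bij_betw_def by auto
  have surj: "\<exists>i<n. f i = t" if "t < c" for t
  proof -
    have "t \<in> g ` (?A // ?R)" using g that cc unfolding bij_betw_def by auto
    then obtain C where C: "C \<in> ?A // ?R" "t = g C" by auto
    then obtain i where "i \<in> ?A" "C = ?R `` {i}" by (auto elim: quotientE)
    thus ?thesis using C unfolding f_def by auto
  qed
  define r where "r = (\<lambda>t. SOME i. i < n \<and> f i = t)"
  have r: "\<forall>t<c. r t < n \<and> f (r t) = t"
  proof (intro allI impI)
    fix t assume "t < c"
    show "r t < n \<and> f (r t) = t" unfolding r_def by (rule someI_ex, rule surj[OF \<open>t < c\<close>])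
  qed
  have fE: "\<forall>i<n. \<forall>j<n. E i j \<longrightarrow> f i = f j"
  proof (intro allI impI)
    fix i j assume ij: "i < n" "j < n" "E i j"
    hence "(i,j) \<in> ?R" unfolding reach_def by auto
    hence "?R `` {i} = ?R `` {j}" using eq ij by (subst eq_equiv_class_iff, auto)
    thus "f i = f j" unfolding f_def by simp
  qed
  have fR: "\<forall>i<n. (i, r (f i)) \<in> ?R"
  proof (intro allI impI)
    fix i assume i: "i < n"
    have ri: "r (f i) < n" "f (r (f i)) = f i" using r f1 i by auto
    hence "g (?R `` {r (f i)}) = g (?R `` {i})" unfolding f_def by simp
    hence "?R `` {i} = ?R `` {r (f i)}" using g cls[OF i] cls[OF ri(1)] unfolding bij_betw_def inj_on_def by metis
    thus "(i, r (f i)) \<in> ?R" using i ri(1) eq_equiv_class_iff[OF eq, of i "r (f i)"] by simp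
  qed
  show ?thesis by (rule exI[of _ f], rule exI[of _ r], intro conjI f1 r fE fR)
qed

locale lap =
  fixes L U :: "real mat" and n :: nat and es :: "real list"
  assumes L: "L \<in> carrier_mat n n" and sym: "transpose_mat L = L"
    and rows: "\<And>i. i < n \<Longrightarrow> (\<Sum>j<n. L $$ (i,j)) = 0"
    and U: "U \<in> carrier_mat n n" and UTU: "transpose_mat U * U = 1\<^sub>m n"
    and UUT: "U * transpose_mat U = 1\<^sub>m n"
    and les: "length es = n" and dec: "L = U * diagm es * transpose_mat U"
begin

lemma Lsym: "i < n \<Longrightarrow> j < n \<Longrightarrow> L $$ (i,j) = L $$ (j,i)"
  using sym L by (metis carrier_matD index_transpose_mat(1))

definition coord :: "real vec \<Rightarrow> real vec" where
  "coord x = transpose_mat U *\<^sub>v x"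

lemma D: "diagm es \<in> carrier_mat n n" using diagm_carrier[of es] les by simp

lemma coord_carrier: "x \<in> carrier_vec n \<Longrightarrow> coord x \<in> carrier_vec n"
  unfolding coord_def using U by auto

lemma coord_idx: "x \<in> carrier_vec n \<Longrightarrow> i < n \<Longrightarrow> coord x $ i = col U i \<bullet> x"
  unfolding coord_def using U by auto

lemma coord_inv: "x \<in> carrier_vec n \<Longrightarrow> U *\<^sub>v coord x = x"
  unfolding coord_def using U UUT
  by (subst assoc_mult_mat_vec[symmetric, of _ n n _ n], auto)

lemma coord_nz: assumes x: "x \<in> carrier_vec n" and nz: "x \<noteq> 0\<^sub>v n"
  shows "\<exists>i<n. coord x $ i \<noteq> 0"
proof (rule ccontr)
  assume "\<not> ?thesis"
  hence "coord x = 0\<^sub>v n" using coord_carrier[OF x] by (intro eq_vecI, auto)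
  hence "U *\<^sub>v coord x = 0\<^sub>v n" using U by auto
  thus False using coord_inv[OF x] nz by simp
qed

lemma diag_mult: assumes c: "c \<in> carrier_vec n" and i: "i < n"
  shows "(diagm es *\<^sub>v c) $ i = es ! i * c $ i"
proof -
  have "(diagm es *\<^sub>v c) $ i = (\<Sum>j\<in>{0..<n}. (if i = j then es ! i else 0) * c $ j)"
    using c i les unfolding diagm_def by (auto simp: mult_mat_vec_def scalar_prod_def)
  also have "\<dots> = (\<Sum>j\<in>{0..<n}. if i = j then es ! i * c $ j else 0)"
    by (rule sum.cong, auto)
  also have "\<dots> = es ! i * c $ i" using i by simp
  finally show ?thesis .
qed

lemma quad: assumes x: "x \<in> carrier_vec n"
  shows "x \<bullet> (L *\<^sub>v x) = (\<Sum>i<n. es ! i * (coord x $ i)^2)"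
proof -
  let ?c = "coord x"
  have c: "?c \<in> carrier_vec n" by (rule coord_carrier[OF x])
  have "L *\<^sub>v x = U *\<^sub>v (diagm es *\<^sub>v ?c)"
    unfolding dec coord_def using U D x
    by (simp add: assoc_mult_mat_vec[of _ n n _ n])
  hence "x \<bullet> (L *\<^sub>v x) = x \<bullet> (U *\<^sub>v (diagm es *\<^sub>v ?c))" by simp
  also have "\<dots> = ?c \<bullet> (diagm es *\<^sub>v ?c)"
    unfolding coord_def using transpose_vec_mult_scalar[OF U, of "diagm es *\<^sub>v (transpose_mat U *\<^sub>v x)" x] U D x
    by auto
  also have "\<dots> = (\<Sum>i\<in>{0..<n}. ?c $ i * (diagm es *\<^sub>v ?c) $ i)"
    unfolding scalar_prod_def using D by auto
  also have "\<dots> = (\<Sum>i<n. es ! i * (?c $ i)^2)"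
    unfolding lessThan_atLeast0 by (rule sum.cong, auto simp: diag_mult[OF c] power2_eq_square)
  finally show ?thesis .
qed

lemma kernel: assumes x: "x \<in> carrier_vec n" and Lx: "L *\<^sub>v x = 0\<^sub>v n" and i: "i < n"
  and e: "es ! i \<noteq> 0"
  shows "coord x $ i = 0"
proof -
  let ?c = "coord x"
  have c: "?c \<in> carrier_vec n" by (rule coord_carrier[OF x])
  have "transpose_mat U *\<^sub>v (L *\<^sub>v x) = diagm es *\<^sub>v ?c"
  proof -
    have "transpose_mat U *\<^sub>v (L *\<^sub>v x) = (transpose_mat U * L) *\<^sub>v x"
      using U L x by (subst assoc_mult_mat_vec, auto)
    also have "transpose_mat U * L = (transpose_mat U * U) * diagm es * transpose_mat U"
      unfolding dec using U D by (simp add: assoc_mult_mat[of _ n n _ n _ n])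
    also have "\<dots> = diagm es * transpose_mat U" unfolding UTU using D by simp
    also have "(diagm es * transpose_mat U) *\<^sub>v x = diagm es *\<^sub>v ?c"
      unfolding coord_def using D U x by (subst assoc_mult_mat_vec, auto)
    finally show ?thesis .
  qed
  moreover have "transpose_mat U *\<^sub>v 0\<^sub>v n = 0\<^sub>v n" using U by (intro eq_vecI, auto)
  ultimately have "(diagm es *\<^sub>v ?c) $ i = 0" unfolding Lx using i by (metis index_zero_vec(1))
  thus ?thesis unfolding diag_mult[OF c i] using e by simp
qed

lemma quad_lap: assumes x: "x \<in> carrier_vec n"
  shows "x \<bullet> (L *\<^sub>v x) = - (1/2) * (\<Sum>i<n. \<Sum>j<n. L $$ (i,j) * (x $ i - x $ j)^2)"
proof -
  define S where "S = (\<Sum>i<n. \<Sum>j<n. L $$ (i,j) * x $ i * x $ j)"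
  have xL: "x \<bullet> (L *\<^sub>v x) = S"
    unfolding S_def scalar_prod_def using x L
    by (auto simp: mult_mat_vec_def scalar_prod_def lessThan_atLeast0 sum_distrib_left mult_ac intro!: sum.cong)
  have T1: "(\<Sum>i<n. \<Sum>j<n. L $$ (i,j) * (x $ i)^2) = 0"
  proof -
    have "(\<Sum>i<n. \<Sum>j<n. L $$ (i,j) * (x $ i)^2) = (\<Sum>i<n. (x $ i)^2 * (\<Sum>j<n. L $$ (i,j)))"
      by (simp add: sum_distrib_left mult_ac)
    also have "\<dots> = 0" using rows by simp
    finally show ?thesis .
  qed
  have T3: "(\<Sum>i<n. \<Sum>j<n. L $$ (i,j) * (x $ j)^2) = 0"
  proof -
    have "(\<Sum>i<n. \<Sum>j<n. L $$ (i,j) * (x $ j)^2) = (\<Sum>j<n. \<Sum>i<n. L $$ (i,j) * (x $ j)^2)"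
      by (rule sum.swap)
    also have "\<dots> = (\<Sum>j<n. (x $ j)^2 * (\<Sum>i<n. L $$ (j,i)))"
      by (simp add: sum_distrib_left mult_ac Lsym)
    also have "\<dots> = 0" using rows by simp
    finally show ?thesis .
  qed
  have pt: "L $$ (i,j) * (x $ i - x $ j)^2 = L $$ (i,j) * (x $ i)^2 - 2 * (L $$ (i,j) * x $ i * x $ j) + L $$ (i,j) * (x $ j)^2" for i j
    by (simp add: power2_diff algebra_simps)
  have "(\<Sum>i<n. \<Sum>j<n. L $$ (i,j) * (x $ i - x $ j)^2) =
     (\<Sum>i<n. \<Sum>j<n. L $$ (i,j) * (x $ i)^2) - 2 * S + (\<Sum>i<n. \<Sum>j<n. L $$ (i,j) * (x $ j)^2)"
    unfolding pt S_def by (simp add: sum.distrib sum_subtractf sum_distrib_left)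
  thus ?thesis unfolding xL T1 T3 by simp
qed

end

definition param :: "nat \<Rightarrow> (nat \<Rightarrow> nat) \<Rightarrow> nat \<Rightarrow> real mat" where
  "param n f c = mat n c (\<lambda>(j,t). if f j = t then 1 else 0)"

lemma param_carrier: "param n f c \<in> carrier_mat n c" unfolding param_def by auto

lemma param_mult: assumes f: "\<forall>j<n. f j < c" and y: "y \<in> carrier_vec c"
  shows "param n f c *\<^sub>v y = vec n (\<lambda>j. y $ f j)"
proof (rule eq_vecI)
  fix j assume "j < dim_vec (vec n (\<lambda>j. y $ f j))"
  hence j: "j < n" by auto
  have "(param n f c *\<^sub>v y) $ j = (\<Sum>t\<in>{0..<c}. (if f j = t then 1 else 0) * y $ t)"
    using j y unfolding param_def by (auto simp: mult_mat_vec_def scalar_prod_def)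
  also have "\<dots> = (\<Sum>t\<in>{0..<c}. if f j = t then y $ t else 0)" by (rule sum.cong, auto)
  also have "\<dots> = y $ f j" using f j by simp
  finally show "(param n f c *\<^sub>v y) $ j = vec n (\<lambda>j. y $ f j) $ j" using j by simp
qed (auto simp: param_def)

lemma filter_idx: "length es = n \<Longrightarrow> length (filter (\<lambda>i. P (es ! i)) [0..<n]) = length (filter P es)"
proof -
  assume les: "length es = n"
  have "es = map (\<lambda>i. es ! i) [0..<n]" using les map_nth[of es] by simp
  hence "length (filter P es) = length (filter P (map (\<lambda>i. es ! i) [0..<n]))" by simp
  also have "\<dots> = length (filter (\<lambda>i. P (es ! i)) [0..<n])" by (simp add: filter_map o_def)
  finally show ?thesis by simp
qed

context lap
begin

definition Ppart :: "real vec \<Rightarrow> real" where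
  "Ppart x = (\<Sum>i<n. \<Sum>j<n. if L $$ (i,j) > 0 then L $$ (i,j) * (x $ i - x $ j)^2 else 0)"

definition Npart :: "real vec \<Rightarrow> real" where
  "Npart x = (\<Sum>i<n. \<Sum>j<n. if L $$ (i,j) < 0 then - L $$ (i,j) * (x $ i - x $ j)^2 else 0)"

lemma quad_PN: assumes x: "x \<in> carrier_vec n"
  shows "x \<bullet> (L *\<^sub>v x) = (Npart x - Ppart x) / 2"
proof -
  have pt: "L $$ (i,j) * (x $ i - x $ j)^2 =
    (if L $$ (i,j) > 0 then L $$ (i,j) * (x $ i - x $ j)^2 else 0)
    - (if L $$ (i,j) < 0 then - L $$ (i,j) * (x $ i - x $ j)^2 else 0)" for i j
    by auto
  have "(\<Sum>i<n. \<Sum>j<n. L $$ (i,j) * (x $ i - x $ j)^2) = Ppart x - Npart x"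
    unfolding Ppart_def Npart_def sum_subtractf[symmetric] by (rule sum.cong, simp, rule sum.cong, simp, rule pt)
  thus ?thesis unfolding quad_lap[OF x] by (simp only:, argo)
qed

lemma Ppart_nonneg: "Ppart x \<ge> 0"
  unfolding Ppart_def by (intro sum_nonneg, auto)

lemma Npart_nonneg: "Npart x \<ge> 0"
  unfolding Npart_def by (intro sum_nonneg, auto simp: mult_nonpos_nonneg)

lemma Ppart_zero: assumes "\<And>i j. i < n \<Longrightarrow> j < n \<Longrightarrow> graph_Gpos L i j \<Longrightarrow> x $ i = x $ j"
  shows "Ppart x = 0"
  unfolding Ppart_def
proof (intro sum.neutral ballI)
  fix i j assume ij: "i \<in> {..<n}" "j \<in> {..<n}"
  show "(if L $$ (i,j) > 0 then L $$ (i,j) * (x $ i - x $ j)^2 else 0) = 0"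
  proof (cases "i = j")
    case False
    thus ?thesis using assms[of i j] ij unfolding graph_Gpos_def by auto
  qed auto
qed

lemma Npart_zero: assumes "\<And>i j. i < n \<Longrightarrow> j < n \<Longrightarrow> graph_Gneg L i j \<Longrightarrow> x $ i = x $ j"
  shows "Npart x = 0"
  unfolding Npart_def
proof (intro sum.neutral ballI)
  fix i j assume ij: "i \<in> {..<n}" "j \<in> {..<n}"
  show "(if L $$ (i,j) < 0 then - L $$ (i,j) * (x $ i - x $ j)^2 else 0) = 0"
  proof (cases "i = j")
    case False
    thus ?thesis using assms[of i j] ij unfolding graph_Gneg_def by auto
  qed auto
qed

lemma Npart_zero_imp: assumes N: "Npart x = 0" and ij: "i < n" "j < n" and E: "graph_Gneg L i j"
  shows "x $ i = x $ j"
proof -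
  define t where "t = (\<lambda>i j. if L $$ (i,j) < 0 then - L $$ (i,j) * (x $ i - x $ j)^2 else 0)"
  have nn: "t i j \<ge> 0" for i j unfolding t_def by (auto simp: mult_nonpos_nonneg)
  have N': "(\<Sum>i<n. \<Sum>j<n. t i j) = 0" using N unfolding Npart_def t_def by simp
  have nn2: "\<forall>i\<in>{..<n}. (\<Sum>j<n. t i j) \<ge> 0" using nn by (simp add: sum_nonneg)
  have "(\<Sum>j<n. t i j) = 0" using sum_nonneg_eq_0_iff[of "{..<n}" "\<lambda>i. \<Sum>j<n. t i j"] nn2 N' ij by blast
  hence "t i j = 0" using sum_nonneg_eq_0_iff[of "{..<n}" "t i"] nn ij by blast
  moreover have "L $$ (i,j) < 0" using E unfolding graph_Gneg_def by auto
  ultimately show ?thesis unfolding t_def by auto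
qed

end

lemma vec_nz: assumes "y \<in> carrier_vec c" "y \<noteq> 0\<^sub>v c" shows "\<exists>t<c. y $ t \<noteq> 0"
proof (rule ccontr)
  assume "\<not> ?thesis"
  hence "y = 0\<^sub>v c" using assms by (intro eq_vecI, auto)
  thus False using assms by auto
qed

context lap
begin

lemma Gpos_sym: "i < n \<Longrightarrow> j < n \<Longrightarrow> graph_Gpos L i j \<Longrightarrow> graph_Gpos L j i"
  unfolding graph_Gpos_def using Lsym by auto
lemma Gneg_sym: "i < n \<Longrightarrow> j < n \<Longrightarrow> graph_Gneg L i j \<Longrightarrow> graph_Gneg L j i"
  unfolding graph_Gneg_def using Lsym by auto
lemma G_sym: "i < n \<Longrightarrow> j < n \<Longrightarrow> graph_G L i j \<Longrightarrow> graph_G L j i"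
  unfolding graph_G_def using Lsym by auto

lemma cols_carrier: "set (map (col U) ps) \<subseteq> carrier_vec n"
  using U by auto

lemma core1: "num_components n (graph_Gneg L) \<le> length (filter (\<lambda>e. e \<le> 0) es)"
proof -
  define c where "c = num_components n (graph_Gneg L)"
  obtain f r where f: "\<forall>i<n. f i < c" and r: "\<forall>t<c. r t < n \<and> f (r t) = t"
    and fE: "\<forall>i<n. \<forall>j<n. graph_Gneg L i j \<longrightarrow> f i = f j"
    using components[of n "graph_Gneg L", OF Gneg_sym] unfolding c_def by blast
  define ps where "ps = filter (\<lambda>i. es ! i \<le> 0) [0..<n]"
  define fs where "fs = map (col U) ps"
  have "c \<le> length fs"
  proof (rule count_bound[OF param_carrier])
    show "set fs \<subseteq> carrier_vec n" unfolding fs_def by (rule cols_carrier)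
    fix y assume y: "y \<in> carrier_vec c" and z: "\<forall>g\<in>set fs. g \<bullet> (param n f c *\<^sub>v y) = 0"
    define x where "x = param n f c *\<^sub>v y"
    have xv: "x = vec n (\<lambda>j. y $ f j)" unfolding x_def by (rule param_mult[OF f y])
    have x: "x \<in> carrier_vec n" unfolding xv by auto
    have cz: "coord x $ i = 0" if "i < n" "es ! i \<le> 0" for i
    proof -
      have "col U i \<in> set fs" unfolding fs_def ps_def using that by auto
      thus ?thesis using z coord_idx[OF x that(1)] unfolding x_def by auto
    qed
    have "Npart x = 0" by (rule Npart_zero, insert fE, auto simp: xv)
    hence le: "x \<bullet> (L *\<^sub>v x) \<le> 0" unfolding quad_PN[OF x] using Ppart_nonneg[of x] by simp
    show "y = 0\<^sub>v c"
    proof (rule ccontr)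
      assume "y \<noteq> 0\<^sub>v c"
      then obtain t where t: "t < c" "y $ t \<noteq> 0" using vec_nz[OF y] by auto
      have "x $ r t \<noteq> 0" using r t unfolding xv by auto
      hence "x \<noteq> 0\<^sub>v n" using r t by auto
      then obtain i where i: "i < n" "coord x $ i \<noteq> 0" using coord_nz[OF x] by auto
      have ei: "es ! i > 0" using cz[OF i(1)] i(2) by force
      have "0 < (\<Sum>k<n. es ! k * (coord x $ k)^2)"
      proof (rule sum_pos2[of _ i])
        show "0 < es ! i * (coord x $ i)^2" using ei i by simp
        fix k assume k: "k \<in> {..<n}"
        show "0 \<le> es ! k * (coord x $ k)^2"
        proof (cases "es ! k \<le> 0")
          case True thus ?thesis using cz[of k] k by simp
        next
          case False thus ?thesis by simp
        qed
      qed (insert i, auto)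
      thus False using le quad[OF x] by simp
    qed
  qed
  thus ?thesis unfolding c_def fs_def ps_def using filter_idx[OF les, of "\<lambda>e. e \<le> 0"] by simp
qed

lemma core2: "num_components n (graph_Gpos L) \<le> length (filter (\<lambda>e. e > 0) es) + num_components n (graph_G L)"
proof -
  define c where "c = num_components n (graph_Gpos L)"
  define cG where "cG = num_components n (graph_G L)"
  obtain f r where f: "\<forall>i<n. f i < c" and r: "\<forall>t<c. r t < n \<and> f (r t) = t"
    and fE: "\<forall>i<n. \<forall>j<n. graph_Gpos L i j \<longrightarrow> f i = f j"
    using components[of n "graph_Gpos L", OF Gpos_sym] unfolding c_def by blast
  obtain fG rG where fG: "\<forall>i<n. fG i < cG" and rG: "\<forall>t<cG. rG t < n \<and> fG (rG t) = t"
    and fR: "\<forall>i<n. (i, rG (fG i)) \<in> reach n (graph_G L)"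
    using components[of n "graph_G L", OF G_sym] unfolding cG_def by blast
  define ps where "ps = filter (\<lambda>i. es ! i > 0) [0..<n]"
  define fs where "fs = map (col U) ps @ map (\<lambda>t. unit_vec n (rG t)) [0..<cG]"
  have "c \<le> length fs"
  proof (rule count_bound[OF param_carrier])
    show "set fs \<subseteq> carrier_vec n" unfolding fs_def using cols_carrier by auto
    fix y assume y: "y \<in> carrier_vec c" and z: "\<forall>g\<in>set fs. g \<bullet> (param n f c *\<^sub>v y) = 0"
    define x where "x = param n f c *\<^sub>v y"
    have xv: "x = vec n (\<lambda>j. y $ f j)" unfolding x_def by (rule param_mult[OF f y])
    have x: "x \<in> carrier_vec n" unfolding xv by auto
    have cz: "coord x $ i = 0" if "i < n" "es ! i > 0" for i
    proof -
      have "col U i \<in> set fs" unfolding fs_def ps_def using that by auto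
      thus ?thesis using z coord_idx[OF x that(1)] unfolding x_def by auto
    qed
    have uz: "x $ rG t = 0" if "t < cG" for t
    proof -
      have "unit_vec n (rG t) \<in> set fs" unfolding fs_def using that by auto
      hence "unit_vec n (rG t) \<bullet> x = 0" using z unfolding x_def by auto
      thus ?thesis using rG that x by simp
    qed
    have "Ppart x = 0" by (rule Ppart_zero, insert fE, auto simp: xv)
    hence ge: "x \<bullet> (L *\<^sub>v x) = Npart x / 2" unfolding quad_PN[OF x] by simp
    have "(\<Sum>k<n. es ! k * (coord x $ k)^2) \<le> 0"
    proof (rule sum_nonpos)
      fix k assume k: "k \<in> {..<n}"
      show "es ! k * (coord x $ k)^2 \<le> 0"
      proof (cases "es ! k > 0")
        case True thus ?thesis using cz[of k] k by simp
      next
        case False thus ?thesis by (simp add: mult_nonpos_nonneg)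
      qed
    qed
    hence "Npart x = 0" using ge quad[OF x] Npart_nonneg[of x] by simp
    hence Nz: "\<And>i j. i < n \<Longrightarrow> j < n \<Longrightarrow> graph_Gneg L i j \<Longrightarrow> x $ i = x $ j"
      using Npart_zero_imp by blast
    have Gz: "x $ i = x $ j" if "i < n" "j < n" "graph_G L i j" for i j
    proof (cases "L $$ (i,j) > 0")
      case True
      hence "graph_Gpos L i j" using that unfolding graph_G_def graph_Gpos_def by auto
      thus ?thesis using fE that unfolding xv by auto
    next
      case False
      hence "graph_Gneg L i j" using that unfolding graph_G_def graph_Gneg_def by auto
      thus ?thesis using Nz that by auto
    qed
    have x0: "x $ i = 0" if "i < n" for i
    proof -
      have "x $ i = x $ rG (fG i)"
        by (rule reach_const[of i _ n "graph_G L" "\<lambda>k. x $ k"], insert fR that Gz, auto)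
      also have "\<dots> = 0" using uz fG that by auto
      finally show ?thesis .
    qed
    show "y = 0\<^sub>v c"
    proof (rule eq_vecI)
      fix t assume "t < dim_vec (0\<^sub>v c :: real vec)"
      hence t: "t < c" by simp
      have "y $ t = x $ r t" using r t unfolding xv by auto
      thus "y $ t = 0\<^sub>v c $ t" using x0 r t by auto
    qed (insert y, auto)
  qed
  moreover have "length fs = length (filter (\<lambda>e. e > 0) es) + cG"
    unfolding fs_def ps_def using filter_idx[OF les, of "\<lambda>e. e > 0"] by simp
  ultimately show ?thesis unfolding c_def cG_def by simp
qed

lemma core3: "num_components n (graph_G L) \<le> length (filter (\<lambda>e. e = 0) es)"
proof -
  define c where "c = num_components n (graph_G L)"
  obtain f r where f: "\<forall>i<n. f i < c" and r: "\<forall>t<c. r t < n \<and> f (r t) = t"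
    and fE: "\<forall>i<n. \<forall>j<n. graph_G L i j \<longrightarrow> f i = f j"
    using components[of n "graph_G L", OF G_sym] unfolding c_def by blast
  define ps where "ps = filter (\<lambda>i. es ! i = 0) [0..<n]"
  define fs where "fs = map (col U) ps"
  have "c \<le> length fs"
  proof (rule count_bound[OF param_carrier])
    show "set fs \<subseteq> carrier_vec n" unfolding fs_def by (rule cols_carrier)
    fix y assume y: "y \<in> carrier_vec c" and z: "\<forall>g\<in>set fs. g \<bullet> (param n f c *\<^sub>v y) = 0"
    define x where "x = param n f c *\<^sub>v y"
    have xv: "x = vec n (\<lambda>j. y $ f j)" unfolding x_def by (rule param_mult[OF f y])
    have x: "x \<in> carrier_vec n" unfolding xv by auto
    have Lx: "L *\<^sub>v x = 0\<^sub>v n"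
    proof (rule eq_vecI)
      fix i assume "i < dim_vec (0\<^sub>v n :: real vec)"
      hence i: "i < n" by simp
      have "(L *\<^sub>v x) $ i = (\<Sum>j\<in>{0..<n}. L $$ (i,j) * x $ j)"
        using L x i by (auto simp: mult_mat_vec_def scalar_prod_def)
      also have "\<dots> = (\<Sum>j\<in>{0..<n}. L $$ (i,j) * x $ i)"
      proof (rule sum.cong)
        fix j assume j: "j \<in> {0..<n}"
        show "L $$ (i,j) * x $ j = L $$ (i,j) * x $ i"
        proof (cases "i = j \<or> L $$ (i,j) = 0")
          case False
          hence "graph_G L i j" unfolding graph_G_def by auto
          thus ?thesis using fE i j unfolding xv by auto
        qed auto
      qed simp
      also have "\<dots> = x $ i * (\<Sum>j<n. L $$ (i,j))"
        by (simp add: sum_distrib_left lessThan_atLeast0 mult_ac)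
      also have "\<dots> = 0" using rows[OF i] by simp
      finally show "(L *\<^sub>v x) $ i = 0\<^sub>v n $ i" using i by simp
    qed (insert L, auto)
    have cz: "coord x $ i = 0" if "i < n" for i
    proof (cases "es ! i = 0")
      case True
      have "col U i \<in> set fs" unfolding fs_def ps_def using that True by auto
      thus ?thesis using z coord_idx[OF x that] unfolding x_def by auto
    next
      case False
      thus ?thesis using kernel[OF x Lx that] by simp
    qed
    have "coord x = 0\<^sub>v n" using cz coord_carrier[OF x] by (intro eq_vecI, auto)
    hence "x = U *\<^sub>v 0\<^sub>v n" using coord_inv[OF x] by simp
    also have "\<dots> = 0\<^sub>v n" using U by (intro eq_vecI, auto)
    finally have x0: "x = 0\<^sub>v n" .
    show "y = 0\<^sub>v c"
    proof (rule eq_vecI)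
      fix t assume "t < dim_vec (0\<^sub>v c :: real vec)"
      hence t: "t < c" by simp
      have "y $ t = x $ r t" using r t unfolding xv by auto
      thus "y $ t = 0\<^sub>v c $ t" using x0 r t by auto
    qed (insert y, auto)
  qed
  thus ?thesis unfolding c_def fs_def ps_def using filter_idx[OF les, of "\<lambda>e. e = 0"] by simp
qed

end

lemma num_components_cong:
  assumes "\<And>i j. i < n \<Longrightarrow> j < n \<Longrightarrow> E1 i j = E2 i j"
  shows "num_components n E1 = num_components n E2"
proof -
  have "Restr {(i,j). E1 i j} {0..<n} = Restr {(i,j). E2 i j} {0..<n}" using assms by auto
  thus ?thesis unfolding num_components_def reach_def by simp
qed

lemma counts: fixes es :: "real list"
  shows "length (filter (\<lambda>e. e > 0) es) + length (filter (\<lambda>e. e < 0) es) + length (filter (\<lambda>e. e = 0) es) = length es"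
    "length (filter (\<lambda>e. e \<le> 0) es) = length (filter (\<lambda>e. e < 0) es) + length (filter (\<lambda>e. e = 0) es)"
    "length (filter (\<lambda>e. e \<ge> 0) es) = length (filter (\<lambda>e. e > 0) es) + length (filter (\<lambda>e. e = 0) es)"
  by (induction es, auto)

lemma counts_neg: fixes es :: "real list"
  shows "length (filter (\<lambda>e. e \<le> 0) (map uminus es)) = length (filter (\<lambda>e. e \<ge> 0) es)"
    "length (filter (\<lambda>e. e > 0) (map uminus es)) = length (filter (\<lambda>e. e < 0) es)"
  by (induction es, auto)

theorem theorem4p1:
  fixes L :: "real mat" and n :: nat
  assumes "n \<ge> 1"
    and "L \<in> carrier_mat n n"
    and "transpose_mat L = L"
    and "\<forall>i<n. L $$ (i,i) = - (\<Sum>j\<in>{0..<n} - {i}. L $$ (i,j))"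
  shows "int (num_components n (graph_Gpos L)) - int (num_components n (graph_G L)) \<le> int (n_pos L)
       \<and> n_pos L \<le> n - num_components n (graph_Gneg L)
       \<and> int (num_components n (graph_Gneg L)) - int (num_components n (graph_G L)) \<le> int (n_neg L)
       \<and> n_neg L \<le> n - num_components n (graph_Gpos L)
       \<and> num_components n (graph_G L) \<le> n_zero L
       \<and> int (n_zero L) \<le> int n + 2 * int (num_components n (graph_G L))
            - int (num_components n (graph_Gpos L)) - int (num_components n (graph_Gneg L))"
proof -
  have Lc: "L \<in> carrier_mat n n" and sym: "transpose_mat L = L" using assms by auto
  have rows: "(\<Sum>j<n. L $$ (i,j)) = 0" if i: "i < n" for i
  proof -
    have "(\<Sum>j<n. L $$ (i,j)) = L $$ (i,i) + (\<Sum>j\<in>{0..<n} - {i}. L $$ (i,j))"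
      unfolding lessThan_atLeast0 using i by (subst sum.remove[of _ i], auto)
    thus ?thesis using assms(4) i by simp
  qed
  obtain U es where U: "U \<in> carrier_mat n n" "transpose_mat U * U = 1\<^sub>m n" "U * transpose_mat U = 1\<^sub>m n"
    "length es = n" "L = U * diagm es * transpose_mat U"
    using spectral[OF Lc sym] by blast
  interpret P: lap L U n es using Lc sym rows U by (unfold_locales, auto)
  have mLc: "- L \<in> carrier_mat n n" using Lc by auto
  have msym: "transpose_mat (- L) = - L" using sym by (simp add: transpose_uminus)
  have mrows: "(\<Sum>j<n. (- L) $$ (i,j)) = 0" if i: "i < n" for i
  proof -
    have "(\<Sum>j<n. (- L) $$ (i,j)) = (\<Sum>j<n. - (L $$ (i,j)))"
      by (rule sum.cong, insert Lc i, auto)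
    thus ?thesis using rows[OF i] by (simp add: sum_negf)
  qed
  have mD: "diagm (map uminus es) = - diagm es"
    by (rule eq_matI, auto simp: diagm_def)
  have mdec: "- L = U * diagm (map uminus es) * transpose_mat U"
  proof -
    have D: "diagm es \<in> carrier_mat n n" using diagm_carrier[of es] U(4) by simp
    have "U * - diagm es = - (U * diagm es)" using U D by (intro uminus_mult_right_mat, auto)
    moreover have "- (U * diagm es) * transpose_mat U = - (U * diagm es * transpose_mat U)"
      using U D by (intro uminus_mult_left_mat, auto)
    ultimately show ?thesis unfolding mD using U by simp
  qed
  interpret M: lap "- L" U n "map uminus es" using mLc msym mrows U mdec by (unfold_locales, auto)
  have gN: "num_components n (graph_Gneg (- L)) = num_components n (graph_Gpos L)"
    by (rule num_components_cong, insert Lc, auto simp: graph_Gneg_def graph_Gpos_def)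
  have gP: "num_components n (graph_Gpos (- L)) = num_components n (graph_Gneg L)"
    by (rule num_components_cong, insert Lc, auto simp: graph_Gneg_def graph_Gpos_def)
  have gG: "num_components n (graph_G (- L)) = num_components n (graph_G L)"
    by (rule num_components_cong, insert Lc, auto simp: graph_G_def)
  note ic = inertia_count[OF Lc U]
  note c1 = P.core1 and c2 = P.core2 and c3 = P.core3
  note d1 = M.core1[unfolded gN counts_neg] and d2 = M.core2[unfolded gN gP gG counts_neg]
  note cs = counts[of es] 
  show ?thesis unfolding ic using c1 c2 c3 d1 d2 cs U(4) by linarith
qed

end
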